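(* Let $F$ be a bipartite graph or an odd cycle. For every $\delta>0$ there exists $\varepsilon>0$ such that for all sufficiently large $n$, every $n$-vertex graph $G$ containing no copy of $F^{\triangle}$ and having at least $n^2/4-\varepsilon n^2$ edges can be made bipartite by removing at most $\delta n^2$ edges. In particular, every $n$-vertex graph $G$ containing no copy of $F^{\triangle}$ satisfies $|G|\le n^2/4+o(n^2)$.
   Context: $|G|$ is the number of edges of $G$. The $\triangle$-blowup $F^{\triangle}$ of a graph $F$ is obtained by replacing each edge $uv$ by a triangle $uvw_{uv}$ with a new vertex $w_{uv}$, distinct edges receiving distinct new vertices. *)

theory Defs
  imports Complex_Main
begin

definition graph :: "'a set \<Rightarrow> 'a set set \<Rightarrow> bool" where
  "graph V E \<longleftrightarrow> finite V \<and> (\<forall>e\<in>E. \<exists>u v. e = {u, v} \<and> u \<noteq> v \<and> u \<in> V \<and> v \<in> V)"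

definition contains_copy :: "'b set \<Rightarrow> 'b set set \<Rightarrow> 'a set \<Rightarrow> 'a set set \<Rightarrow> bool" where
  "contains_copy V E VH EH \<longleftrightarrow>
     (\<exists>f. inj_on f VH \<and> f ` VH \<subseteq> V \<and> (\<forall>u v. {u, v} \<in> EH \<longrightarrow> {f u, f v} \<in> E))"

definition bipartite :: "'a set \<Rightarrow> 'a set set \<Rightarrow> bool" where
  "bipartite V E \<longleftrightarrow> (\<exists>A \<subseteq> V. \<forall>e\<in>E. card (e \<inter> A) = 1)"

definition odd_cycle :: "'a set \<Rightarrow> 'a set set \<Rightarrow> bool" where
  "odd_cycle V E \<longleftrightarrow> (\<exists>(k::nat) g. k \<ge> 3 \<and> odd k \<and> bij_betw g {0..<k} V \<and>
      E = {{g i, g ((i + 1) mod k)} | i. i < k})"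

text \<open>The triangle blowup: each edge e = {u,v} is replaced by a triangle u v w_e,
  with the new vertex w_e represented as Inr e.\<close>
definition tri_blowup_V :: "'a set \<Rightarrow> 'a set set \<Rightarrow> ('a + 'a set) set" where
  "tri_blowup_V V E = Inl ` V \<union> Inr ` E"

definition tri_blowup_E :: "'a set \<Rightarrow> 'a set set \<Rightarrow> ('a + 'a set) set set" where
  "tri_blowup_E V E = (\<lambda>e. Inl ` e) ` E \<union> {{Inl u, Inr e} | u e. e \<in> E \<and> u \<in> e}"

end

theory Submission imports Defs begin

definition nbr :: "'b set \<Rightarrow> 'b set set \<Rightarrow> 'b \<Rightarrow> 'b set" where
  "nbr V E v = {x\<in>V. {v,x} \<in> E}"

lemma graph_edge: "graph V E \<Longrightarrow> e \<in> E \<Longrightarrow> \<exists>u v. e = {u,v} \<and> u\<noteq>v \<and> u\<in>V \<and> v\<in>V"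
  unfolding graph_def by blast

lemma graph_finE: assumes "graph V E" shows "finite E" "card E \<le> card V ^ 2"
proof -
  have sub: "E \<subseteq> (\<lambda>(u,v). {u,v}) ` (V \<times> V)" using assms unfolding graph_def by fastforce
  have fV: "finite V" using assms graph_def by blast
  show "finite E" by (rule finite_subset[OF sub]) (use fV in simp)
  have "card E \<le> card ((\<lambda>(u,v). {u,v}) ` (V \<times> V))" using sub fV by (simp add: card_mono)
  also have "\<dots> \<le> card (V \<times> V)" by (rule card_image_le) (use fV in auto)
  finally show "card E \<le> card V ^ 2" by (simp add: card_cartesian_product power2_eq_square)
qed

lemma graph_sub: assumes "graph V E" "e \<in> E" shows "e \<subseteq> V"
proof -
  obtain a b where ab: "e = {a,b}" "a \<in> V" "b\<in>V" using graph_edge[OF assms] by blast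
  show ?thesis unfolding ab(1) using ab(2,3) by simp
qed

lemma nbr_sym: assumes "u \<in> V" shows "x \<in> nbr V E u \<longleftrightarrow> x \<in> V \<and> u \<in> nbr V E x"
proof -
  have c: "{u,x} = {x,u}" by (rule insert_commute)
  show ?thesis unfolding nbr_def mem_Collect_eq c using assms by simp
qed

lemma nbr_self: assumes "graph V E" shows "v \<notin> nbr V E v"
proof
  assume "v \<in> nbr V E v"
  then have "{v,v} \<in> E" unfolding nbr_def by simp
  then have "\<exists>a b. {v,v} = {a,b} \<and> a \<noteq> b \<and> a \<in> V \<and> b \<in> V" by (rule graph_edge[OF assms])
  then obtain a b where ab: "{v,v} = {a,b}" "a \<noteq> b" by (elim exE conjE)
  have "a \<in> {v,v}" "b \<in> {v,v}" unfolding ab(1) by simp_all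
  then show False using ab(2) by simp
qed

lemma nbr_sub: "nbr V E v \<subseteq> V" unfolding nbr_def by auto

lemma graph_finV: "graph V E \<Longrightarrow> finite V" by (simp add: graph_def)

lemma fin_nbr: assumes "graph V E" shows "finite (nbr V E v)"
  by (rule finite_subset[OF nbr_sub]) (rule graph_finV[OF assms])

lemma edge_other: assumes "graph V E" "e \<in> E" "v \<in> e"
  shows "\<exists>x\<in>V. e = {v,x}"
proof -
  obtain a b where ab: "e = {a,b}" "a \<in> V" "b\<in>V" using graph_edge[OF assms(1,2)] by blast
  from assms(3) have "v = a \<or> v = b" unfolding ab(1) by simp
  then show ?thesis
  proof
    assume "v = a"
    then have "e = {v,b}" by (simp only: ab(1))
    then show ?thesis using ab(3) by (rule rev_bexI[rotated])
  next
    assume "v = b"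
    have "{a,b} = {b,a}" by (rule insert_commute)
    then have "e = {v,a}" by (simp only: ab(1) \<open>v = b\<close>)
    then show ?thesis using ab(2) by (rule rev_bexI[rotated])
  qed
qed

lemma deg_edges: assumes "graph V E" "v \<in> V"
  shows "card {e\<in>E. v\<in>e} = card (nbr V E v)"
proof -
  have "bij_betw (\<lambda>x. {v,x}) (nbr V E v) {e\<in>E. v\<in>e}"
  proof (rule bij_betwI')
    fix x y assume "x \<in> nbr V E v" "y \<in> nbr V E v"
    show "({v, x} = {v, y}) = (x = y)"
    proof
      assume h: "{v, x} = {v, y}"
      have "x \<in> {v,y}" unfolding h[symmetric] by simp
      moreover have "y \<in> {v,x}" unfolding h by simp
      ultimately show "x = y" by blast
    qed simp
  next
    fix x assume "x \<in> nbr V E v"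
    then show "{v, x} \<in> {e \<in> E. v \<in> e}" unfolding nbr_def by simp
  next
    fix e assume "e \<in> {e \<in> E. v \<in> e}"
    then have eE: "e \<in> E" and ve: "v \<in> e" by simp_all
    obtain x where x: "x \<in> V" "e = {v,x}" using edge_other[OF assms(1) eE ve] by blast
    have "x \<in> nbr V E v" unfolding nbr_def using x eE by simp
    then show "\<exists>x\<in>nbr V E v. e = {v, x}" using x(2) by (rule rev_bexI)
  qed
  then have "card (nbr V E v) = card {e\<in>E. v\<in>e}" by (rule bij_betw_same_card)
  then show ?thesis by simp
qed

lemma double_count:
  fixes f :: "'b \<Rightarrow> real"
  assumes "finite A" "finite B"
  shows "(\<Sum>a\<in>A. \<Sum>b\<in>{b\<in>B. P a b}. f b) = (\<Sum>b\<in>B. real (card {a\<in>A. P a b}) * f b)"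
proof -
  have "(\<Sum>a\<in>A. \<Sum>b\<in>{b\<in>B. P a b}. f b) = (\<Sum>a\<in>A. \<Sum>b\<in>B. if P a b then f b else 0)"
    using assms by (simp add: sum.inter_filter)
  also have "\<dots> = (\<Sum>b\<in>B. \<Sum>a\<in>A. if P a b then f b else 0)" by (rule sum.swap)
  also have "\<dots> = (\<Sum>b\<in>B. real (card {a\<in>A. P a b}) * f b)"
    using assms by (simp add: sum.inter_filter[symmetric])
  finally show ?thesis .
qed

lemma double_count1:
  assumes "finite A" "finite B"
  shows "(\<Sum>a\<in>A. real (card {b\<in>B. P a b})) = (\<Sum>b\<in>B. real (card {a\<in>A. P a b}))"
  using double_count[OF assms, where P=P and f="\<lambda>_. 1"] by simp

lemma handshake: assumes "graph V E"
  shows "(\<Sum>v\<in>V. real (card (nbr V E v))) = 2 * real (card E)"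
proof -
  have fV: "finite V" using graph_finV[OF assms] .
  have fE: "finite E" using graph_finE[OF assms] by simp
  have "(\<Sum>v\<in>V. real (card (nbr V E v))) = (\<Sum>v\<in>V. real (card {e\<in>E. v\<in>e}))"
    using deg_edges[OF assms] by simp
  also have "\<dots> = (\<Sum>e\<in>E. real (card {v\<in>V. v\<in>e}))" by (rule double_count1[OF fV fE])
  also have "\<dots> = (\<Sum>e\<in>E. 2)"
  proof (rule sum.cong)
    fix e assume "e \<in> E"
    then obtain u v where "e = {u,v}" "u\<noteq>v" "u\<in>V" "v\<in>V" using graph_edge[OF assms] by blast
    then have "{v\<in>V. v\<in>e} = {u,v}" by auto
    then show "real (card {v\<in>V. v\<in>e}) = 2" using \<open>u\<noteq>v\<close> by simp
  qed simp
  finally show ?thesis by simp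
qed

definition tinc :: "'b set \<Rightarrow> 'b set set \<Rightarrow> real" where
  "tinc V E = (\<Sum>e\<in>E. real (card {x\<in>V. e \<subseteq> nbr V E x}))"

lemma cs_sum: fixes f :: "'x \<Rightarrow> real" assumes "finite A"
  shows "(sum f A)^2 \<le> real (card A) * (\<Sum>a\<in>A. (f a)^2)"
proof (cases "A = {}")
  case True thus ?thesis by simp
next
  case False then have n: "real (card A) > 0" using assms by auto
  define r where "r = sum f A / real (card A)"
  have "0 \<le> (\<Sum>a\<in>A. (f a - r)^2)" by (simp add: sum_nonneg)
  also have "\<dots> = (\<Sum>a\<in>A. (f a)^2 - (2*r) * f a + r^2)"
    by (rule sum.cong) (simp_all add: power2_eq_square algebra_simps)
  also have "\<dots> = (\<Sum>a\<in>A. (f a)^2) - 2*r*sum f A + real (card A) * r^2"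
    by (simp add: sum.distrib sum_subtractf sum_distrib_left[symmetric])
  also have "\<dots> = (\<Sum>a\<in>A. (f a)^2) - (sum f A)^2 / real (card A)"
    using n by (simp add: r_def field_simps power2_eq_square)
  finally show ?thesis using n by (simp add: field_simps)
qed

lemma avg_min: fixes g :: "'x \<Rightarrow> real" assumes "finite A" "A \<noteq> {}"
  shows "\<exists>x\<in>A. real (card A) * g x \<le> sum g A"
proof (rule ccontr)
  assume "\<not> ?thesis" then have h: "\<And>x. x\<in>A \<Longrightarrow> sum g A < real (card A) * g x" by (simp add: not_le)
  have "(\<Sum>x\<in>A. sum g A) < (\<Sum>x\<in>A. real (card A) * g x)"
    by (rule sum_strict_mono[OF assms h])
  then show False by (simp add: sum_distrib_left[symmetric])
qed

lemma avg_max: fixes g :: "'x \<Rightarrow> real" assumes "finite A" "A \<noteq> {}"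
  shows "\<exists>x\<in>A. sum g A \<le> real (card A) * g x"
proof (rule ccontr)
  assume "\<not> ?thesis" then have h: "\<And>x. x\<in>A \<Longrightarrow> real (card A) * g x < sum g A" by (simp add: not_le)
  have "(\<Sum>x\<in>A. real (card A) * g x) < (\<Sum>x\<in>A. sum g A)"
    by (rule sum_strict_mono[OF assms h])
  then show False by (simp add: sum_distrib_left[symmetric])
qed

lemma edge_identity:
  assumes g: "graph V E" and eE: "e \<in> E"
  shows "real (card {x\<in>V. e \<inter> nbr V E x = {}}) + (\<Sum>w\<in>e. real (card (nbr V E w)))
          = real (card V) + real (card {x\<in>V. e \<subseteq> nbr V E x})"
proof -
  obtain u v where uv: "e = {u,v}" "u \<noteq> v" "u \<in> V" "v \<in> V" using graph_edge[OF g eE] by blast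
  have fV: "finite V" by (rule graph_finV[OF g])
  have S1: "{x\<in>V. e \<subseteq> nbr V E x} = nbr V E u \<inter> nbr V E v"
    unfolding uv(1) using nbr_sym[OF uv(3), of _ E] nbr_sym[OF uv(4), of _ E] by auto
  have S2: "{x\<in>V. e \<inter> nbr V E x = {}} = V - (nbr V E u \<union> nbr V E v)"
    unfolding uv(1) using nbr_sym[OF uv(3), of _ E] nbr_sym[OF uv(4), of _ E] by auto
  have c1: "card (V - (nbr V E u \<union> nbr V E v)) = card V - card (nbr V E u \<union> nbr V E v)"
    by (rule card_Diff_subset) (use fin_nbr[OF g] nbr_sub[of V E u] nbr_sub[of V E v] in auto)
  have c1': "card (nbr V E u \<union> nbr V E v) \<le> card V"
    by (rule card_mono[OF fV]) (use nbr_sub[of V E u] nbr_sub[of V E v] in auto)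
  have c2: "card (nbr V E u \<union> nbr V E v) + card (nbr V E u \<inter> nbr V E v) = card (nbr V E u) + card (nbr V E v)"
    using card_Un_Int[OF fin_nbr[OF g] fin_nbr[OF g]] by simp
  have c3: "(\<Sum>w\<in>e. real (card (nbr V E w))) = real (card (nbr V E u)) + real (card (nbr V E v))"
    unfolding uv(1) using uv(2) by simp
  show ?thesis unfolding S1 S2 c3 using c1 c1' c2 by linarith
qed

lemma sum_sq_deg:
  assumes g: "graph V E"
  shows "(\<Sum>e\<in>E. \<Sum>w\<in>e. real (card (nbr V E w))) = (\<Sum>w\<in>V. (real (card (nbr V E w)))^2)"
proof -
  have fV: "finite V" by (rule graph_finV[OF g])
  have fE: "finite E" using graph_finE[OF g] by simp
  have "(\<Sum>e\<in>E. \<Sum>w\<in>e. real (card (nbr V E w))) = (\<Sum>e\<in>E. \<Sum>w\<in>{w\<in>V. w \<in> e}. real (card (nbr V E w)))"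
  proof (rule sum.cong[OF refl])
    fix e assume "e \<in> E"
    then have "{w\<in>V. w \<in> e} = e" using graph_sub[OF g] by blast
    then show "(\<Sum>w\<in>e. real (card (nbr V E w))) = (\<Sum>w\<in>{w\<in>V. w \<in> e}. real (card (nbr V E w)))" by simp
  qed
  also have "\<dots> = (\<Sum>w\<in>V. real (card {e\<in>E. w\<in>e}) * real (card (nbr V E w)))"
    by (rule double_count[OF fE fV])
  also have "\<dots> = (\<Sum>w\<in>V. (real (card (nbr V E w)))^2)"
    using deg_edges[OF g] by (simp add: power2_eq_square)
  finally show ?thesis .
qed

lemma tinc_lower:
  assumes g: "graph V E"
  shows "(\<Sum>w\<in>V. (real (card (nbr V E w)))^2) - real (card V) * real (card E) \<le> tinc V E"
proof -
  have "(\<Sum>w\<in>V. (real (card (nbr V E w)))^2) - real (card V) * real (card E)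
     = (\<Sum>e\<in>E. (\<Sum>w\<in>e. real (card (nbr V E w))) - real (card V))"
    by (simp add: sum_sq_deg[OF g] sum_subtractf)
  also have "\<dots> \<le> (\<Sum>e\<in>E. real (card {x\<in>V. e \<subseteq> nbr V E x}))"
  proof (rule sum_mono)
    fix e assume "e \<in> E"
    from edge_identity[OF g this] show "(\<Sum>w\<in>e. real (card (nbr V E w))) - real (card V) \<le> real (card {x\<in>V. e \<subseteq> nbr V E x})"
      by linarith
  qed
  finally show ?thesis unfolding tinc_def .
qed

lemma deg_cs:
  assumes g: "graph V E"
  shows "4 * (real (card E))^2 \<le> real (card V) * (\<Sum>w\<in>V. (real (card (nbr V E w)))^2)"
proof -
  have "(2 * real (card E))^2 \<le> real (card V) * (\<Sum>w\<in>V. (real (card (nbr V E w)))^2)"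
    using cs_sum[OF graph_finV[OF g], of "\<lambda>w. real (card (nbr V E w))"] handshake[OF g] by simp
  then show ?thesis by (simp add: power2_eq_square)
qed

lemma bip_bound:
  assumes g: "graph V E" and n: "card V > 0"
  shows "\<exists>D\<subseteq>E. bipartite V (E - D) \<and>
    real (card V) * real (card D) \<le> real (card V) * real (card E) - (\<Sum>w\<in>V. (real (card (nbr V E w)))^2) + 2 * tinc V E"
proof -
  have fV: "finite V" by (rule graph_finV[OF g])
  have fE: "finite E" using graph_finE[OF g] by simp
  define P where "P = (\<lambda>x e. e \<subseteq> nbr V E x \<or> e \<inter> nbr V E x = {})"
  have "(\<Sum>x\<in>V. real (card {e\<in>E. P x e})) = (\<Sum>e\<in>E. real (card {x\<in>V. P x e}))"
    by (rule double_count1[OF fV fE])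
  also have "\<dots> = (\<Sum>e\<in>E. real (card V) - (\<Sum>w\<in>e. real (card (nbr V E w))) + 2 * real (card {x\<in>V. e \<subseteq> nbr V E x}))"
  proof (rule sum.cong[OF refl])
    fix e assume eE: "e \<in> E"
    obtain u v where uv: "e = {u,v}" "u \<noteq> v" "u \<in> V" "v \<in> V" using graph_edge[OF g eE] by blast
    have "{x\<in>V. P x e} = {x\<in>V. e \<subseteq> nbr V E x} \<union> {x\<in>V. e \<inter> nbr V E x = {}}"
      unfolding P_def by (simp add: Collect_disj_eq Collect_conj_eq Int_Un_distrib)
    moreover have "card ({x\<in>V. e \<subseteq> nbr V E x} \<union> {x\<in>V. e \<inter> nbr V E x = {}}) = card {x\<in>V. e \<subseteq> nbr V E x} + card {x\<in>V. e \<inter> nbr V E x = {}}"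
    proof (rule card_Un_disjoint)
      show "finite {x\<in>V. e \<subseteq> nbr V E x}" using fV by simp
      show "finite {x\<in>V. e \<inter> nbr V E x = {}}" using fV by simp
      have ue: "u \<in> e" using uv(1) by simp
      show "{x\<in>V. e \<subseteq> nbr V E x} \<inter> {x\<in>V. e \<inter> nbr V E x = {}} = {}"
        using ue by blast
    qed
    ultimately show "real (card {x\<in>V. P x e}) = real (card V) - (\<Sum>w\<in>e. real (card (nbr V E w))) + 2 * real (card {x\<in>V. e \<subseteq> nbr V E x})"
      using edge_identity[OF g eE] by simp
  qed
  also have "\<dots> = real (card V) * real (card E) - (\<Sum>w\<in>V. (real (card (nbr V E w)))^2) + 2 * tinc V E"
    by (simp add: sum.distrib sum_subtractf sum_sq_deg[OF g] tinc_def sum_distrib_left)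
  finally have tot: "(\<Sum>x\<in>V. real (card {e\<in>E. P x e})) = real (card V) * real (card E) - (\<Sum>w\<in>V. (real (card (nbr V E w)))^2) + 2 * tinc V E" .
  have "V \<noteq> {}" using n by auto
  then obtain x where xV: "x \<in> V" and xb: "real (card V) * real (card {e\<in>E. P x e}) \<le> (\<Sum>x\<in>V. real (card {e\<in>E. P x e}))"
    using avg_min[OF fV \<open>V \<noteq> {}\<close>, of "\<lambda>x. real (card {e\<in>E. P x e})"] by blast
  have "bipartite V (E - {e\<in>E. P x e})"
    unfolding bipartite_def
  proof (intro exI[of _ "nbr V E x"] conjI ballI)
    show "nbr V E x \<subseteq> V" by (rule nbr_sub)
    fix e assume "e \<in> E - {e\<in>E. P x e}"
    then have eE: "e \<in> E" and nP: "\<not> e \<subseteq> nbr V E x" "e \<inter> nbr V E x \<noteq> {}" unfolding P_def by auto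
    obtain u v where uv: "e = {u,v}" "u \<noteq> v" using graph_edge[OF g eE] by blast
    have "(u \<in> nbr V E x \<and> v \<notin> nbr V E x) \<or> (v \<in> nbr V E x \<and> u \<notin> nbr V E x)"
      using nP unfolding uv(1) by auto
    then show "card (e \<inter> nbr V E x) = 1"
    proof
      assume h: "u \<in> nbr V E x \<and> v \<notin> nbr V E x"
      then have "e \<inter> nbr V E x = {u}" unfolding uv(1) by auto
      then show ?thesis by simp
    next
      assume h: "v \<in> nbr V E x \<and> u \<notin> nbr V E x"
      then have "e \<inter> nbr V E x = {v}" unfolding uv(1) by auto
      then show ?thesis by simp
    qed
  qed
  moreover have "{e\<in>E. P x e} \<subseteq> E" by blast
  moreover have "real (card V) * real (card {e\<in>E. P x e}) \<le> real (card V) * real (card E) - (\<Sum>w\<in>V. (real (card (nbr V E w)))^2) + 2 * tinc V E"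
    using xb tot by linarith
  ultimately show ?thesis by (intro exI[of _ "{e\<in>E. P x e}"] conjI)
qed

lemma kst_gen:
  fixes P :: "'p set" and Q :: "'q set" and N :: "'q \<Rightarrow> 'p set" and t :: nat
  assumes fP: "finite P" and fQ: "finite Q" and t1: "1 \<le> t" and tP: "t \<le> card P"
    and NP: "\<And>q. q \<in> Q \<Longrightarrow> N q \<subseteq> P"
    and big: "2 * real t * real (card Q) \<le> (\<Sum>q\<in>Q. real (card (N q)))"
  shows "\<exists>X. X \<subseteq> P \<and> card X = t \<and>
     (\<Sum>q\<in>Q. real (card (N q))) / (2 * real (card P)) * ((\<Sum>q\<in>Q. real (card (N q))) / (2 * real t * real (card Q))) ^ t
       \<le> real (card {q\<in>Q. X \<subseteq> N q}) * real (card P) ^ t"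
proof -
  define I where "I = (\<Sum>q\<in>Q. real (card (N q)))"
  define m where "m = card P"
  define M where "M = card Q"
  define a where "a = I / (2 * real M)"
  define T where "T = {X. X \<subseteq> P \<and> card X = t}"
  define f where "f = (\<lambda>X. real (card {q\<in>Q. X \<subseteq> N q}))"
  have m0: "real m > 0" using tP t1 m_def by simp
  have fT: "finite T" unfolding T_def by (rule finite_subset[of _ "Pow P"]) (use fP in auto)
  have cT: "card T = m choose t" unfolding T_def m_def by (rule n_subsets[OF fP])
  have "card T > 0" using cT tP m_def by simp
  then have Tne: "T \<noteq> {}" by auto
  have fnn: "\<And>X. 0 \<le> f X" unfolding f_def by simp
  have cTm: "real (card T) \<le> real m ^ t"
    using binomial_le_pow[of t m] tP m_def cT by (metis of_nat_le_iff of_nat_power)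
  show ?thesis
  proof (cases "M = 0")
    case True
    then have "Q = {}" using fQ M_def by simp
    then have I0: "I = 0" unfolding I_def by simp
    obtain X where "X \<in> T" using Tne by blast
    moreover have "0 \<le> f X * real m ^ t" using fnn by simp
    ultimately show ?thesis unfolding T_def using I0 unfolding I_def f_def m_def by auto
  next
    case False
    then have M0: "real M > 0" by simp
    define Q' where "Q' = {q\<in>Q. a \<le> real (card (N q))}"
    have Q'Q: "Q' \<subseteq> Q" unfolding Q'_def by auto
    have I0: "I \<ge> 0" unfolding I_def by (simp add: sum_nonneg)
    have a0: "a \<ge> 0" unfolding a_def using I0 M0 by simp
    have sQ: "I = (\<Sum>q\<in>Q-Q'. real (card (N q))) + (\<Sum>q\<in>Q'. real (card (N q)))"
      unfolding I_def by (rule sum.subset_diff[OF Q'Q fQ])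
    have "(\<Sum>q\<in>Q-Q'. real (card (N q))) \<le> real (card (Q-Q')) * a"
      by (rule sum_bounded_above) (auto simp: Q'_def)
    also have "\<dots> \<le> real M * a"
      using a0 card_mono[OF fQ, of "Q - Q'"] M_def by (simp add: mult_right_mono)
    also have "\<dots> = I / 2" unfolding a_def using M0 by simp
    finally have s1: "I / 2 \<le> (\<Sum>q\<in>Q'. real (card (N q)))" using sQ by linarith
    have "(\<Sum>q\<in>Q'. real (card (N q))) \<le> real (card Q') * real m"
      by (rule sum_bounded_above) (use NP card_mono[OF fP] Q'Q m_def in auto)
    then have cQ': "I / (2 * real m) \<le> real (card Q')"
      using s1 m0 by (simp add: field_simps)
    have at: "real t \<le> a" unfolding a_def using big M0 I_def M_def by (simp add: field_simps)
    have t0: "real t > 0" using t1 by simp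
    have lb: "(a / real t) ^ t \<le> real (card (N q) choose t)" if "q \<in> Q'" for q
    proof -
      have h: "a \<le> real (card (N q))" using that Q'_def by simp
      then have tq: "t \<le> card (N q)" using at by simp
      have "(a / real t) ^ t \<le> (real (card (N q)) / real t) ^ t"
        by (rule power_mono) (use h t0 a0 in \<open>simp_all add: divide_right_mono\<close>)
      also have "\<dots> \<le> real (card (N q) choose t)" by (rule binomial_ge_n_over_k_pow_k[OF tq])
      finally show ?thesis .
    qed
    have fN: "finite (N q)" if "q \<in> Q" for q using NP[OF that] fP by (rule finite_subset)
    have "I / (2 * real m) * (a / real t) ^ t \<le> real (card Q') * (a / real t) ^ t"
      by (rule mult_right_mono[OF cQ']) (use a0 t0 in simp)
    also have "\<dots> \<le> (\<Sum>q\<in>Q'. real (card (N q) choose t))"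
      by (rule sum_bounded_below) (rule lb)
    also have "\<dots> \<le> (\<Sum>q\<in>Q. real (card (N q) choose t))"
      by (rule sum_mono2[OF fQ Q'Q]) simp
    also have "\<dots> = (\<Sum>q\<in>Q. real (card {X\<in>T. X \<subseteq> N q}))"
    proof (rule sum.cong[OF refl])
      fix q assume qQ: "q \<in> Q"
      have "{X\<in>T. X \<subseteq> N q} = {X. X \<subseteq> N q \<and> card X = t}"
        unfolding T_def using NP[OF qQ] by blast
      then show "real (card (N q) choose t) = real (card {X\<in>T. X \<subseteq> N q})"
        using n_subsets[OF fN[OF qQ], of t] by simp
    qed
    also have "\<dots> = sum f T" unfolding f_def by (rule double_count1[OF fT fQ, symmetric])
    finally have main: "I / (2 * real m) * (a / real t) ^ t \<le> sum f T" .
    obtain X where XT: "X \<in> T" and Xb: "sum f T \<le> real (card T) * f X"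
      using avg_max[OF fT Tne, of f] by blast
    have "real (card T) * f X \<le> real m ^ t * f X" by (rule mult_right_mono[OF cTm fnn])
    then have fin: "I / (2 * real m) * (a / real t) ^ t \<le> f X * real m ^ t"
      using main Xb by (simp add: mult.commute)
    have eq: "a / real t = I / (2 * real t * real M)" unfolding a_def by (simp add: field_simps)
    show ?thesis using XT fin unfolding eq T_def f_def I_def m_def M_def by blast
  qed
qed


definition K3 :: "'b set \<Rightarrow> 'b set set \<Rightarrow> nat \<Rightarrow> bool" where
  "K3 V E t \<longleftrightarrow> (\<exists>X Y Z. X \<subseteq> V \<and> Y \<subseteq> V \<and> Z \<subseteq> V \<and> card X = t \<and> card Y = t \<and> card Z = t \<and>
     X \<inter> Y = {} \<and> X \<inter> Z = {} \<and> Y \<inter> Z = {} \<and>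
     (\<forall>x\<in>X. \<forall>y\<in>Y. {x,y} \<in> E) \<and> (\<forall>x\<in>X. \<forall>z\<in>Z. {x,z} \<in> E) \<and> (\<forall>y\<in>Y. \<forall>z\<in>Z. {y,z} \<in> E))"

lemma prod_mono_pow: fixes A B :: real
  shows "0 \<le> A \<Longrightarrow> A \<le> A' \<Longrightarrow> 0 \<le> B \<Longrightarrow> B \<le> B' \<Longrightarrow> A * B^t \<le> A' * B'^t"
  by (intro mult_mono power_mono) auto

lemma tri_K3:
  fixes t :: nat and \<eta> :: real
  assumes t1: "1 \<le> t" and eta: "\<eta> > 0"
  shows "\<exists>N::nat. \<forall>n\<ge>N. \<forall>(V::'b set) E. graph V E \<and> card V = n \<and> \<eta> * real n ^ 3 \<le> tinc V E \<longrightarrow> K3 V E t"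
proof -
  define \<gamma> where "\<gamma> = (\<eta>/2) * (\<eta>/(2*real t))^t"
  define \<kappa> where "\<kappa> = \<gamma> * (\<gamma>/real t)^t"
  have t0: "real t > 0" using t1 by simp
  have g0: "\<gamma> > 0" unfolding \<gamma>_def using eta t0 by simp
  have k0: "\<kappa> > 0" unfolding \<kappa>_def using g0 t0 by simp
  define N where "N = nat \<lceil>2*real t/\<eta> + real t/\<gamma> + real t/\<kappa>\<rceil> + t + 1"
  show ?thesis
  proof (intro exI[of _ N] allI impI, elim conjE)
    fix n :: nat and V :: "'b set" and E
    assume nN: "n \<ge> N" and g: "graph V E" and cV: "card V = n" and I: "\<eta> * real n ^ 3 \<le> tinc V E"
    have "2*real t/\<eta> + real t/\<gamma> + real t/\<kappa> \<le> real (nat \<lceil>2*real t/\<eta> + real t/\<gamma> + real t/\<kappa>\<rceil>)"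
      by (rule real_nat_ceiling_ge)
    moreover have "real N \<le> real n" using nN by simp
    moreover have "0 \<le> 2*real t/\<eta>" "0 \<le> real t/\<gamma>" "0 \<le> real t/\<kappa>" using eta g0 k0 by simp_all
    ultimately have nb1: "2*real t/\<eta> \<le> real n" and nb2: "real t/\<gamma> \<le> real n" and nb3: "real t/\<kappa> \<le> real n"
      and ntr: "real t + 1 \<le> real n" unfolding N_def by linarith+
    have nt: "t \<le> n" using ntr by simp
    have n0: "real n > 0" using ntr t0 by simp
    have nb1': "2 * real t \<le> \<eta> * real n" using nb1 eta by (simp add: field_simps)
    have nb2': "real t \<le> \<gamma> * real n" using nb2 g0 by (simp add: field_simps)
    have nb3': "real t \<le> \<kappa> * real n" using nb3 k0 by (simp add: field_simps)
    have fV: "finite V" by (rule graph_finV[OF g])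
    have fE: "finite E" using graph_finE[OF g] by simp
    have cE: "real (card E) \<le> real n ^ 2" using graph_finE(2)[OF g] cV by (metis of_nat_le_iff of_nat_power)
    define Nx where "Nx = (\<lambda>e. {x\<in>V. e \<subseteq> nbr V E x})"
    define I' where "I' = (\<Sum>e\<in>E. real (card (Nx e)))"
    have II: "tinc V E = I'" by (simp add: tinc_def Nx_def I'_def)
    have I1: "\<eta> * real n ^ 3 \<le> I'" using I II by simp
    have n3: "real n ^ 3 = real n * real n ^ 2" by (simp add: power3_eq_cube power2_eq_square)
    have "2 * real t * real (card E) \<le> \<eta> * real n * real n ^ 2"
      by (rule mult_mono[OF nb1' cE]) (use eta in simp_all)
    then have big1: "2 * real t * real (card E) \<le> I'" using I1 n3 by (simp add: mult.assoc)
    have NxV: "\<And>e. e \<in> E \<Longrightarrow> Nx e \<subseteq> V" unfolding Nx_def by auto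
    obtain X where XV: "X \<subseteq> V" and cX: "card X = t" and
      b1: "I' / (2 * real (card V)) * (I' / (2 * real t * real (card E))) ^ t
            \<le> real (card {e\<in>E. X \<subseteq> Nx e}) * real (card V) ^ t"
      using kst_gen[OF fV fE t1 _ NxV big1[unfolded I'_def]] nt cV unfolding I'_def by blast
    define C where "C = {e\<in>E. X \<subseteq> Nx e}"
    have Epos: "real (card E) > 0"
    proof (rule ccontr)
      assume "\<not> real (card E) > 0"
      then have "E = {}" using fE by simp
      then have "I' = 0" unfolding I'_def by simp
      moreover have "\<eta> * real n ^ 3 > 0" using eta n0 by simp
      ultimately show False using I1 by linarith
    qed
    have L1: "\<eta> * real n ^ 2 / 2 \<le> I' / (2 * real n)"
      using I1 n0 n3 by (simp add: field_simps)
    have "\<eta> * real n * real (card E) \<le> \<eta> * real n * real n ^ 2"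
      by (rule mult_left_mono[OF cE]) (use eta n0 in simp)
    then have L2: "\<eta> * real n / (2 * real t) \<le> I' / (2 * real t * real (card E))"
      using I1 n3 Epos t0 by (simp add: field_simps)
    have "(\<eta> * real n ^ 2 / 2) * (\<eta> * real n / (2 * real t)) ^ t \<le> I' / (2 * real n) * (I' / (2 * real t * real (card E))) ^ t"
      by (rule prod_mono_pow[OF _ L1 _ L2]) (use eta n0 t0 in simp_all)
    also have "\<dots> \<le> real (card C) * real n ^ t" using b1 cV unfolding C_def by simp
    finally have b1': "(\<eta> * real n ^ 2 / 2) * (\<eta> * real n / (2 * real t)) ^ t \<le> real (card C) * real n ^ t" .
    have "(\<eta> * real n ^ 2 / 2) * (\<eta> * real n / (2 * real t)) ^ t = (\<gamma> * real n ^ 2) * real n ^ t"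
    proof -
      have hh: "\<eta> * real n / (2 * real t) = (\<eta> / (2 * real t)) * real n" by simp
      have "(\<eta> * real n / (2 * real t)) ^ t = (\<eta> / (2 * real t)) ^ t * real n ^ t"
        unfolding hh by (rule power_mult_distrib)
      then show ?thesis unfolding \<gamma>_def by simp
    qed
    then have "(\<gamma> * real n ^ 2) * real n ^ t \<le> real (card C) * real n ^ t" using b1' by linarith
    then have Cb: "\<gamma> * real n ^ 2 \<le> real (card C)" using n0 by (simp add: mult_le_cancel_right_pos)
    define V' where "V' = V - X"
    have gC: "graph V' C" unfolding graph_def
    proof (intro conjI ballI)
      show "finite V'" unfolding V'_def using fV by simp
      fix e assume eC: "e \<in> C"
      then have eE: "e \<in> E" and Xe: "X \<subseteq> Nx e" unfolding C_def by auto
      obtain u v where uv: "e = {u,v}" "u \<noteq> v" "u \<in> V" "v \<in> V" using graph_edge[OF g eE] by blast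
      have nX: "w \<notin> X" if "w \<in> e" for w
      proof
        assume "w \<in> X"
        then have "e \<subseteq> nbr V E w" using Xe unfolding Nx_def by auto
        then show False using that nbr_self[OF g, of w] by auto
      qed
      show "\<exists>u v. e = {u, v} \<and> u \<noteq> v \<and> u \<in> V' \<and> v \<in> V'"
        using uv nX unfolding V'_def by auto
    qed
    have fV': "finite V'" using graph_finV[OF gC] .
    have V'V: "V' \<subseteq> V" unfolding V'_def by auto
    have n'n: "real (card V') \<le> real n" using card_mono[OF fV V'V] cV by simp
    have Cn': "real (card C) \<le> real (card V') ^ 2" using graph_finE(2)[OF gC] by (metis of_nat_le_iff of_nat_power)
    have gn: "\<gamma> * real n ^ 2 = (\<gamma> * real n) * real n" by (simp add: power2_eq_square)
    have tnC: "real t * real n \<le> real (card C)"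
    proof -
      have "real t * real n \<le> (\<gamma> * real n) * real n" by (rule mult_right_mono[OF nb2']) (use n0 in simp)
      then show ?thesis using Cb gn by simp
    qed
    have n'0: "real (card V') > 0"
    proof (rule ccontr)
      assume "\<not> real (card V') > 0"
      then have "real (card V') = 0" by simp
      then have "real (card C) \<le> 0" using Cn' by simp
      moreover have "real t * real n > 0" using t0 n0 by simp
      ultimately show False using tnC by linarith
    qed
    have "real t * real (card V') \<le> real t * real n"
      by (rule mult_left_mono[OF n'n]) (use t0 in simp)
    then have tn'C: "real t * real (card V') \<le> real (card C)" using tnC by linarith
    have "real t * real (card V') \<le> real (card V') * real (card V')"
      using tn'C Cn' by (simp add: power2_eq_square)
    then have "real t \<le> real (card V')" using n'0 by (simp add: mult_le_cancel_right_pos)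
    then have tV': "t \<le> card V'" by simp
    have hs: "(\<Sum>y\<in>V'. real (card (nbr V' C y))) = 2 * real (card C)" by (rule handshake[OF gC])
    have big2: "2 * real t * real (card V') \<le> (\<Sum>y\<in>V'. real (card (nbr V' C y)))"
      using hs tn'C by simp
    obtain Y where YV: "Y \<subseteq> V'" and cY: "card Y = t" and
      b2: "(\<Sum>y\<in>V'. real (card (nbr V' C y))) / (2 * real (card V')) *
             ((\<Sum>y\<in>V'. real (card (nbr V' C y))) / (2 * real t * real (card V'))) ^ t
            \<le> real (card {z\<in>V'. Y \<subseteq> nbr V' C z}) * real (card V') ^ t"
      using kst_gen[OF fV' fV' t1 tV' nbr_sub big2] by blast
    define Z0 where "Z0 = {z\<in>V'. Y \<subseteq> nbr V' C z}"
    have gnn': "\<gamma> * real n * real (card V') \<le> real (card C)"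
    proof -
      have "\<gamma> * real n * real (card V') \<le> \<gamma> * real n * real n"
        by (rule mult_left_mono[OF n'n]) (use g0 n0 in simp)
      then show ?thesis using Cb gn by simp
    qed
    have M1: "\<gamma> * real n \<le> 2 * real (card C) / (2 * real (card V'))"
      using gnn' n'0 by (simp add: field_simps)
    have M2: "\<gamma> * real n / real t \<le> 2 * real (card C) / (2 * real t * real (card V'))"
      using gnn' n'0 t0 by (simp add: field_simps)
    have "(\<gamma> * real n) * (\<gamma> * real n / real t) ^ t \<le> 2 * real (card C) / (2 * real (card V')) * (2 * real (card C) / (2 * real t * real (card V'))) ^ t"
      by (rule prod_mono_pow[OF _ M1 _ M2]) (use g0 n0 t0 in simp_all)
    also have "\<dots> \<le> real (card Z0) * real (card V') ^ t" using b2 hs unfolding Z0_def by simp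
    also have "\<dots> \<le> real (card Z0) * real n ^ t"
      by (rule mult_left_mono[OF power_mono[OF n'n]]) simp_all
    finally have b2': "(\<gamma> * real n) * (\<gamma> * real n / real t) ^ t \<le> real (card Z0) * real n ^ t" .
    have "(\<gamma> * real n) * (\<gamma> * real n / real t) ^ t = (\<kappa> * real n) * real n ^ t"
    proof -
      have hh: "\<gamma> * real n / real t = (\<gamma> / real t) * real n" by simp
      have "(\<gamma> * real n / real t) ^ t = (\<gamma> / real t) ^ t * real n ^ t"
        unfolding hh by (rule power_mult_distrib)
      then show ?thesis unfolding \<kappa>_def by simp
    qed
    then have "(\<kappa> * real n) * real n ^ t \<le> real (card Z0) * real n ^ t" using b2' by linarith
    then have "\<kappa> * real n \<le> real (card Z0)" using n0 by (simp add: mult_le_cancel_right_pos)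
    then have "t \<le> card Z0" using nb3' by linarith
    then obtain Z where ZZ0: "Z \<subseteq> Z0" and cZ: "card Z = t" by (meson obtain_subset_with_card_n)
    have Zne: "Z \<noteq> {}" using cZ t1 by auto
    have ZV': "Z \<subseteq> V'" using ZZ0 unfolding Z0_def by auto
    have YZ: "\<And>y z. y \<in> Y \<Longrightarrow> z \<in> Z \<Longrightarrow> {z,y} \<in> C"
      using ZZ0 unfolding Z0_def nbr_def by auto
    have XYZ: "\<And>x y z. x \<in> X \<Longrightarrow> y \<in> Y \<Longrightarrow> z \<in> Z \<Longrightarrow> {x,y} \<in> E \<and> {x,z} \<in> E"
    proof -
      fix x y z assume xX: "x \<in> X" and yY: "y \<in> Y" and zZ: "z \<in> Z"
      have "{z,y} \<subseteq> nbr V E x" using YZ[OF yY zZ] xX unfolding C_def Nx_def by auto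
      then show "{x,y} \<in> E \<and> {x,z} \<in> E" unfolding nbr_def by auto
    qed
    show "K3 V E t" unfolding K3_def
    proof (rule exI[of _ X], rule exI[of _ Y], rule exI[of _ Z], intro conjI ballI)
      show "X \<subseteq> V" by (rule XV)
      show "card X = t" by (rule cX)
      show "card Y = t" by (rule cY)
      show "card Z = t" by (rule cZ)
      show "Y \<subseteq> V" using YV V'V by auto
      show "Z \<subseteq> V" using ZV' V'V by auto
      show "X \<inter> Y = {}" using YV unfolding V'_def by auto
      show "X \<inter> Z = {}" using ZV' unfolding V'_def by auto
      show "Y \<inter> Z = {}"
      proof (rule ccontr)
        assume "Y \<inter> Z \<noteq> {}"
        then obtain w where "w \<in> Y" "w \<in> Z" by auto
        then have "w \<in> nbr V' C w" using ZZ0 unfolding Z0_def by auto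
        then show False using nbr_self[OF gC] by auto
      qed
      fix x y assume "x \<in> X" "y \<in> Y"
      then show "{x,y} \<in> E" using XYZ Zne by blast
    next
      fix x z assume "x \<in> X" "z \<in> Z"
      moreover obtain y where "y \<in> Y" using cY t1 by fastforce
      ultimately show "{x,z} \<in> E" using XYZ by blast
    next
      fix y z assume "y \<in> Y" "z \<in> Z"
      then have "{z,y} \<in> E" using YZ unfolding C_def by auto
      moreover have "{z,y} = {y,z}" by (rule insert_commute)
      ultimately show "{y,z} \<in> E" by simp
    qed
  qed
qed

lemma edge_sym: "{a,b} \<in> E \<Longrightarrow> {b,a} \<in> E"
proof -
  assume h: "{a,b} \<in> E"
  have "{b,a} = {a,b}" by (rule insert_commute)
  then show "{b,a} \<in> E" using h by simp
qed

lemma card2_le: "card {a,b} \<le> 2"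
  by (cases "a = b") simp_all

lemma three_col:
  assumes g: "graph VF EF" and h: "bipartite VF EF \<or> odd_cycle VF EF"
  shows "\<exists>c::'a \<Rightarrow> nat. (\<forall>v. c v < 3) \<and> (\<forall>e\<in>EF. \<forall>u\<in>e. \<forall>v\<in>e. u \<noteq> v \<longrightarrow> c u \<noteq> c v)"
  using h
proof
  assume "bipartite VF EF"
  then obtain A where A: "\<And>e. e \<in> EF \<Longrightarrow> card (e \<inter> A) = 1" unfolding bipartite_def by blast
  define c where "c = (\<lambda>v. if v \<in> A then 0 else (1::nat))"
  show ?thesis
  proof (intro exI[of _ c] conjI allI ballI impI)
    fix v show "c v < 3" unfolding c_def by simp
  next
    fix e u v assume eE: "e \<in> EF" and ue: "u \<in> e" and ve: "v \<in> e" and uv: "u \<noteq> v"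
    have "card (e \<inter> A) = Suc 0" using A[OF eE] by simp
    then obtain w where w: "e \<inter> A = {w}" unfolding card_1_singleton_iff by blast
    show "c u \<noteq> c v"
    proof
      assume cuv: "c u = c v"
      show False
      proof (cases "u \<in> A")
        case True
        then have "v \<in> A" using cuv unfolding c_def by (auto split: if_splits)
        then have "u \<in> {w}" "v \<in> {w}" using True ue ve w by blast+
        then show False using uv by simp
      next
        case False
        then have "v \<notin> A" using cuv unfolding c_def by (auto split: if_splits)
        have wA: "w \<in> e" "w \<in> A" using w by blast+
        then have wu: "w \<noteq> u" "w \<noteq> v" using False \<open>v \<notin> A\<close> by auto
        obtain a b where ab: "e = {a,b}" using graph_edge[OF g eE] by blast
        have "{u,v,w} \<subseteq> e" using ue ve wA by simp
        then have "card {u,v,w} \<le> card e" by (rule card_mono[rotated]) (simp add: ab)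
        moreover have "card {u,v,w} = 3" using uv wu by simp
        moreover have "card e \<le> 2" unfolding ab by (rule card2_le)
        ultimately show False by simp
      qed
    qed
  qed
next
  assume "odd_cycle VF EF"
  then obtain k :: nat and g where k3: "k \<ge> 3" and bij: "bij_betw g {0..<k} VF"
    and EFd: "EF = {{g i, g ((i + 1) mod k)} | i. i < k}" unfolding odd_cycle_def by blast
  define cc where "cc = (\<lambda>i::nat. if i = k - 1 then 2 else i mod 2)"
  define c where "c = (\<lambda>v. cc (inv_into {0..<k} g v))"
  have ccne: "cc i \<noteq> cc ((i + 1) mod k)" if "i < k" for i
  proof (cases "i = k - 1")
    case True
    then have "(i + 1) mod k = 0" using k3 by simp
    then show ?thesis unfolding cc_def using True k3 by simp
  next
    case False
    then have j: "(i + 1) mod k = i + 1" using that by simp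
    show ?thesis
    proof (cases "i + 1 = k - 1")
      case True then show ?thesis unfolding cc_def j using False by simp
    next
      case False2: False
      then show ?thesis unfolding cc_def j using False by presburger
    qed
  qed
  have inj: "inj_on g {0..<k}" using bij by (simp add: bij_betw_def)
  have cg: "c (g i) = cc i" if "i < k" for i
    unfolding c_def using inv_into_f_f[OF inj, of i] that by simp
  show ?thesis
  proof (intro exI[of _ c] conjI allI ballI impI)
    fix v
    define i where "i = inv_into {0..<k} g v"
    have "i mod 2 < 2" by simp
    then have i3: "i mod 2 < 3" by linarith
    show "c v < 3" unfolding c_def i_def[symmetric] cc_def using i3 by simp
  next
    fix e u v assume eE: "e \<in> EF" and ue: "u \<in> e" and ve: "v \<in> e" and uv: "u \<noteq> v"
    then obtain i where i: "i < k" "e = {g i, g ((i + 1) mod k)}" using EFd by blast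
    have j: "(i + 1) mod k < k" using k3 by simp
    have cne: "c (g i) \<noteq> c (g ((i + 1) mod k))" using cg[OF i(1)] cg[OF j] ccne[OF i(1)] by simp
    have "u = g i \<or> u = g ((i + 1) mod k)" "v = g i \<or> v = g ((i + 1) mod k)" using ue ve i(2) by simp_all
    then show "c u \<noteq> c v" using uv cne by auto
  qed
qed

lemma embed:
  fixes VF :: "'a set" and EF :: "'a set set" and V :: "'b set" and E and c :: "'a \<Rightarrow> nat"
  assumes gF: "graph VF EF" and c3: "\<forall>v. c v < 3"
    and cp: "\<forall>e\<in>EF. \<forall>u\<in>e. \<forall>v\<in>e. u \<noteq> v \<longrightarrow> c u \<noteq> c v"
    and K: "K3 V E t" and t1: "1 \<le> t" and tb: "card (tri_blowup_V VF EF) \<le> t"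
  shows "contains_copy V E (tri_blowup_V VF EF) (tri_blowup_E VF EF)"
proof -
  define VH where "VH = tri_blowup_V VF EF"
  define EH where "EH = tri_blowup_E VF EF"
  have fVF: "finite VF" by (rule graph_finV[OF gF])
  have fEF: "finite EF" using graph_finE[OF gF] by simp
  have fVH: "finite VH" unfolding VH_def tri_blowup_V_def using fVF fEF by simp
  define third where "third = (\<lambda>S::nat set. if 0 \<notin> S then 0 else if 1 \<notin> S then 1 else (2::nat))"
  define col where "col = (\<lambda>z. case z of Inl v \<Rightarrow> c v | Inr e \<Rightarrow> third (c ` e))"
  have thr: "third (c ` e) \<notin> c ` e" if eE: "e \<in> EF" for e
  proof -
    obtain a b where ab: "e = {a,b}" "a \<noteq> b" using graph_edge[OF gF eE] by blast
    have "c a \<noteq> c b" using cp eE ab by simp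
    moreover have "c a < 3" "c b < 3" using c3 by simp_all
    ultimately show ?thesis unfolding ab(1) third_def by auto
  qed
  have col3: "col z < 3" for z
    unfolding col_def third_def using c3 by (cases z) auto
  have colp: "col u \<noteq> col v \<and> u \<in> VH \<and> v \<in> VH" if uvE: "{u,v} \<in> EH" for u v
  proof -
    from uvE have "{u,v} \<in> (\<lambda>e. Inl ` e) ` EF \<or> {u,v} \<in> {{Inl a, Inr e} | a e. e \<in> EF \<and> a \<in> e}"
      unfolding EH_def tri_blowup_E_def by blast
    then show ?thesis
    proof
      assume "{u,v} \<in> (\<lambda>e. Inl ` e) ` EF"
      then obtain e where eE: "e \<in> EF" and ue: "{u,v} = Inl ` e" by blast
      obtain a b where ab: "e = {a,b}" "a \<noteq> b" "a \<in> VF" "b \<in> VF" using graph_edge[OF gF eE] by blast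
      have "{u,v} = {Inl a, Inl b}" using ue ab(1) by simp
      then have uv: "(u = Inl a \<and> v = Inl b) \<or> (u = Inl b \<and> v = Inl a)" by (simp add: doubleton_eq_iff)
      have "c a \<noteq> c b" using cp eE ab by simp
      then show ?thesis using uv ab(3,4) unfolding col_def VH_def tri_blowup_V_def by auto
    next
      assume "{u,v} \<in> {{Inl a, Inr e} | a e. e \<in> EF \<and> a \<in> e}"
      then obtain a e where eE: "e \<in> EF" and ae: "a \<in> e" and ue: "{u,v} = {Inl a, Inr e}" by blast
      have aV: "a \<in> VF" using graph_sub[OF gF eE] ae by blast
      have uv: "(u = Inl a \<and> v = Inr e) \<or> (u = Inr e \<and> v = Inl a)" using ue by (simp add: doubleton_eq_iff)
      have ca: "c a \<in> c ` e" using ae by simp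
      have "c a \<noteq> third (c ` e)"
      proof
        assume "c a = third (c ` e)"
        then show False using ca thr[OF eE] by simp
      qed
      then show ?thesis using uv aV eE unfolding col_def VH_def tri_blowup_V_def by auto
    qed
  qed
  obtain X Y Z where XYZ: "X \<subseteq> V" "Y \<subseteq> V" "Z \<subseteq> V" "card X = t" "card Y = t" "card Z = t"
     "X \<inter> Y = {}" "X \<inter> Z = {}" "Y \<inter> Z = {}"
     and XY: "\<forall>x\<in>X. \<forall>y\<in>Y. {x,y} \<in> E" and XZ: "\<forall>x\<in>X. \<forall>z\<in>Z. {x,z} \<in> E" and YZ: "\<forall>y\<in>Y. \<forall>z\<in>Z. {y,z} \<in> E"
    using K unfolding K3_def by (elim exE conjE) (rule that; assumption)
  define pt where "pt = (\<lambda>j::nat. if j = 0 then X else if j = 1 then Y else Z)"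
  have ptV: "pt j \<subseteq> V" for j unfolding pt_def using XYZ by simp
  have ptc: "card (pt j) = t" for j unfolding pt_def using XYZ by simp
  have ptf: "finite (pt j)" for j using ptc[of j] t1 by (metis card.infinite not_one_le_zero)
  have ptd: "pt i \<inter> pt j = {}" if "i < 3" "j < 3" "i \<noteq> j" for i j
  proof -
    have "(i=0\<and>j=1) \<or> (i=0\<and>j=2) \<or> (i=1\<and>j=0) \<or> (i=1\<and>j=2) \<or> (i=2\<and>j=0) \<or> (i=2\<and>j=1)"
      using that by presburger
    then show ?thesis unfolding pt_def using XYZ(7,8,9) by (elim disjE conjE) (simp_all add: Int_commute)
  qed
  have XY': "\<And>x y. x \<in> X \<Longrightarrow> y \<in> Y \<Longrightarrow> {x,y} \<in> E" using XY by blast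
  have XZ': "\<And>x y. x \<in> X \<Longrightarrow> y \<in> Z \<Longrightarrow> {x,y} \<in> E" using XZ by blast
  have YZ': "\<And>x y. x \<in> Y \<Longrightarrow> y \<in> Z \<Longrightarrow> {x,y} \<in> E" using YZ by blast
  have YX': "\<And>x y. x \<in> X \<Longrightarrow> y \<in> Y \<Longrightarrow> {y,x} \<in> E" using XY' by (rule edge_sym)
  have ZX': "\<And>x y. x \<in> X \<Longrightarrow> y \<in> Z \<Longrightarrow> {y,x} \<in> E" using XZ' by (rule edge_sym)
  have ZY': "\<And>x y. x \<in> Y \<Longrightarrow> y \<in> Z \<Longrightarrow> {y,x} \<in> E" using YZ' by (rule edge_sym)
  have pte: "{p,q} \<in> E" if "i < 3" "j < 3" "i \<noteq> j" "p \<in> pt i" "q \<in> pt j" for i j p q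
  proof -
    have "(i=0\<and>j=1) \<or> (i=0\<and>j=2) \<or> (i=1\<and>j=0) \<or> (i=1\<and>j=2) \<or> (i=2\<and>j=0) \<or> (i=2\<and>j=1)"
      using that by presburger
    then show ?thesis using that(4,5) unfolding pt_def
      by (elim disjE conjE) (simp_all add: XY' XZ' YZ' YX' ZX' ZY')
  qed
  have "\<forall>j. \<exists>h. h ` VH \<subseteq> pt j \<and> inj_on h VH"
  proof
    fix j
    have "card VH \<le> card (pt j)" using tb ptc unfolding VH_def by simp
    from card_le_inj[OF fVH ptf this] show "\<exists>h. h ` VH \<subseteq> pt j \<and> inj_on h VH" by blast
  qed
  then obtain H where H: "\<And>j. H j ` VH \<subseteq> pt j" "\<And>j. inj_on (H j) VH" by metis
  define f where "f = (\<lambda>z. H (col z) z)"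
  have fpt: "f z \<in> pt (col z)" if "z \<in> VH" for z unfolding f_def using H(1) that by blast
  show ?thesis unfolding contains_copy_def VH_def[symmetric] EH_def[symmetric]
  proof (intro exI[of _ f] conjI allI impI)
    show "inj_on f VH"
    proof (rule inj_onI)
      fix z1 z2 assume z1: "z1 \<in> VH" and z2: "z2 \<in> VH" and eq: "f z1 = f z2"
      have "col z1 = col z2"
      proof (rule ccontr)
        assume "col z1 \<noteq> col z2"
        then have "pt (col z1) \<inter> pt (col z2) = {}" using ptd col3 by blast
        then show False using fpt[OF z1] fpt[OF z2] eq by auto
      qed
      then have "H (col z1) z1 = H (col z1) z2" using eq unfolding f_def by simp
      then show "z1 = z2" using H(2)[of "col z1"] z1 z2 by (simp add: inj_on_def)
    qed
    show "f ` VH \<subseteq> V" using fpt ptV by blast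
    fix u v assume uvE: "{u,v} \<in> EH"
    from colp[OF uvE] have "col u \<noteq> col v" "u \<in> VH" "v \<in> VH" by simp_all
    then show "{f u, f v} \<in> E" using pte[OF col3 col3 _ fpt fpt] by blast
  qed
qed

theorem proposition2p9:
  fixes VF :: "'a set" and EF :: "'a set set"
  assumes "graph VF EF"
    and "bipartite VF EF \<or> odd_cycle VF EF"
  shows "(\<forall>\<delta>::real. \<delta> > 0 \<longrightarrow> (\<exists>\<epsilon>::real. \<epsilon> > 0 \<and> (\<exists>N. \<forall>n \<ge> N. \<forall>(V::'b set) E.
            graph V E \<and> card V = n \<and>
            \<not> contains_copy V E (tri_blowup_V VF EF) (tri_blowup_E VF EF) \<and>
            real (card E) \<ge> real n ^ 2 / 4 - \<epsilon> * real n ^ 2 \<longrightarrow>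
            (\<exists>D \<subseteq> E. real (card D) \<le> \<delta> * real n ^ 2 \<and> bipartite V (E - D)))))
       \<and> (\<forall>\<epsilon>::real. \<epsilon> > 0 \<longrightarrow> (\<exists>N. \<forall>n \<ge> N. \<forall>(V::'b set) E.
            graph V E \<and> card V = n \<and>
            \<not> contains_copy V E (tri_blowup_V VF EF) (tri_blowup_E VF EF) \<longrightarrow>
            real (card E) \<le> real n ^ 2 / 4 + \<epsilon> * real n ^ 2))"
proof -
  obtain c :: "'a \<Rightarrow> nat" where c3: "\<forall>v. c v < 3" and cp: "\<forall>e\<in>EF. \<forall>u\<in>e. \<forall>v\<in>e. u \<noteq> v \<longrightarrow> c u \<noteq> c v"
    using three_col[OF assms] by blast
  define t where "t = card (tri_blowup_V VF EF) + 1"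
  have t1: "1 \<le> t" unfolding t_def by simp
  have key: "\<exists>N::nat. \<forall>n\<ge>N. \<forall>(V::'b set) E. graph V E \<and> card V = n \<and>
      \<not> contains_copy V E (tri_blowup_V VF EF) (tri_blowup_E VF EF) \<longrightarrow> tinc V E < \<eta> * real n ^ 3"
    if eta: "\<eta> > 0" for \<eta>
  proof -
    obtain N :: nat where N: "\<forall>n\<ge>N. \<forall>(V::'b set) E. graph V E \<and> card V = n \<and> \<eta> * real n ^ 3 \<le> tinc V E \<longrightarrow> K3 V E t"
      using tri_K3[OF t1 eta] by blast
    show ?thesis
    proof (intro exI[of _ N] allI impI, elim conjE)
      fix n :: nat and V :: "'b set" and E
      assume n: "n \<ge> N" and g: "graph V E" and cV: "card V = n"
        and nc: "\<not> contains_copy V E (tri_blowup_V VF EF) (tri_blowup_E VF EF)"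
      show "tinc V E < \<eta> * real n ^ 3"
      proof (rule ccontr)
        assume "\<not> tinc V E < \<eta> * real n ^ 3"
        then have "K3 V E t" using N n g cV by auto
        then have "contains_copy V E (tri_blowup_V VF EF) (tri_blowup_E VF EF)"
          by (rule embed[OF assms(1) c3 cp _ t1]) (simp add: t_def)
        then show False using nc by simp
      qed
    qed
  qed
  show ?thesis
  proof (intro conjI allI impI)
    fix \<delta> :: real assume d0: "\<delta> > 0"
    obtain N :: nat where N: "\<forall>n\<ge>N. \<forall>(V::'b set) E. graph V E \<and> card V = n \<and>
      \<not> contains_copy V E (tri_blowup_V VF EF) (tri_blowup_E VF EF) \<longrightarrow> tinc V E < (\<delta>/4) * real n ^ 3"
      using key[of "\<delta>/4"] d0 by auto
    show "\<exists>\<epsilon>>0. \<exists>N. \<forall>n\<ge>N. \<forall>(V::'b set) E. graph V E \<and> card V = n \<and>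
            \<not> contains_copy V E (tri_blowup_V VF EF) (tri_blowup_E VF EF) \<and>
            real n ^ 2 / 4 - \<epsilon> * real n ^ 2 \<le> real (card E) \<longrightarrow>
            (\<exists>D\<subseteq>E. real (card D) \<le> \<delta> * real n ^ 2 \<and> bipartite V (E - D))"
    proof (intro exI[of _ "\<delta>/4"] conjI)
      show "\<delta>/4 > 0" using d0 by simp
    next
     show "\<exists>N. \<forall>n\<ge>N. \<forall>(V::'b set) E. graph V E \<and> card V = n \<and>
            \<not> contains_copy V E (tri_blowup_V VF EF) (tri_blowup_E VF EF) \<and>
            real n ^ 2 / 4 - \<delta>/4 * real n ^ 2 \<le> real (card E) \<longrightarrow>
            (\<exists>D\<subseteq>E. real (card D) \<le> \<delta> * real n ^ 2 \<and> bipartite V (E - D))"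
     proof (intro exI[of _ "max N 1"] allI impI, elim conjE)
      fix n :: nat and V :: "'b set" and E
      assume n: "max N 1 \<le> n" and g: "graph V E" and cV: "card V = n"
        and nc: "\<not> contains_copy V E (tri_blowup_V VF EF) (tri_blowup_E VF EF)"
        and eb: "real n ^ 2 / 4 - \<delta> / 4 * real n ^ 2 \<le> real (card E)"
      have ti: "tinc V E < (\<delta>/4) * real n ^ 3" using N n g cV nc by auto
      have n0: "real n > 0" using n by simp
      obtain D where DE: "D \<subseteq> E" and bip: "bipartite V (E - D)"
        and Db: "real (card V) * real (card D) \<le> real (card V) * real (card E) - (\<Sum>w\<in>V. (real (card (nbr V E w)))^2) + 2 * tinc V E"
        using bip_bound[OF g] n cV by auto
      define e where "e = real (card E)"
      define S where "S = (\<Sum>w\<in>V. (real (card (nbr V E w)))^2)"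
      define nn where "nn = real n"
      have cs: "4 * e^2 \<le> nn * S" using deg_cs[OF g] cV unfolding e_def S_def nn_def by simp
      have e0: "e \<ge> 0" unfolding e_def by simp
      have Db': "nn * real (card D) \<le> nn * e - S + 2 * tinc V E" using Db cV unfolding e_def S_def nn_def by simp
      have key2: "e * (nn^2 - 4*e) \<le> (\<delta>/4) * nn^4"
      proof (cases "nn^2 - 4*e \<le> 0")
        case True
        then have "e * (nn^2 - 4*e) \<le> 0" using e0 by (simp add: mult_nonneg_nonpos)
        moreover have "0 \<le> (\<delta>/4) * nn^4" using d0 by simp
        ultimately show ?thesis by linarith
      next
        case False
        then have "e \<le> nn^2/4" by simp
        moreover have "nn^2 - 4*e \<le> 4 * (\<delta>/4) * nn^2" using eb unfolding e_def nn_def by simp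
        ultimately have "e * (nn^2 - 4*e) \<le> (nn^2/4) * (4 * (\<delta>/4) * nn^2)"
          using False e0 by (intro mult_mono) simp_all
        also have "\<dots> = (\<delta>/4) * nn^4" by (simp add: power2_eq_square power4_eq_xxxx)
        finally show ?thesis .
      qed
      have "nn * (nn * real (card D)) \<le> nn * (nn * e - S + 2 * tinc V E)"
        using Db' n0 unfolding nn_def by simp
      also have "\<dots> = nn^2 * e - nn * S + 2 * nn * tinc V E" by (simp add: algebra_simps power2_eq_square)
      also have "\<dots> \<le> nn^2 * e - 4 * e^2 + 2 * nn * tinc V E" using cs by simp
      also have "\<dots> = e * (nn^2 - 4*e) + 2 * nn * tinc V E" by (simp add: algebra_simps power2_eq_square)
      also have "\<dots> \<le> (\<delta>/4) * nn^4 + 2 * nn * ((\<delta>/4) * nn^3)"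
        using key2 ti n0 unfolding nn_def by (intro add_mono mult_left_mono) simp_all
      also have "\<dots> \<le> (\<delta> * nn^2) * nn^2" using d0 n0 unfolding nn_def
        by (simp add: power2_eq_square power3_eq_cube power4_eq_xxxx algebra_simps)
      finally have "real (card D) * nn^2 \<le> (\<delta> * nn^2) * nn^2" by (simp add: power2_eq_square algebra_simps)
      then have "real (card D) \<le> \<delta> * nn^2" using n0 unfolding nn_def by (simp add: mult_le_cancel_right_pos)
      then show "\<exists>D\<subseteq>E. real (card D) \<le> \<delta> * real n ^ 2 \<and> bipartite V (E - D)"
        using DE bip unfolding nn_def by blast
     qed
    qed
  next
    fix \<epsilon> :: real assume e0: "\<epsilon> > 0"
    obtain N :: nat where N: "\<forall>n\<ge>N. \<forall>(V::'b set) E. graph V E \<and> card V = n \<and>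
      \<not> contains_copy V E (tri_blowup_V VF EF) (tri_blowup_E VF EF) \<longrightarrow> tinc V E < \<epsilon> * real n ^ 3"
      using key[OF e0] by auto
    show "\<exists>N. \<forall>n\<ge>N. \<forall>(V::'b set) E. graph V E \<and> card V = n \<and>
            \<not> contains_copy V E (tri_blowup_V VF EF) (tri_blowup_E VF EF) \<longrightarrow>
            real (card E) \<le> real n ^ 2 / 4 + \<epsilon> * real n ^ 2"
    proof (intro exI[of _ "max N 1"] allI impI, elim conjE)
      fix n :: nat and V :: "'b set" and E
      assume n: "max N 1 \<le> n" and g: "graph V E" and cV: "card V = n"
        and nc: "\<not> contains_copy V E (tri_blowup_V VF EF) (tri_blowup_E VF EF)"
      have ti: "tinc V E < \<epsilon> * real n ^ 3" using N n g cV nc by auto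
      have n0: "real n > 0" using n by simp
      define e where "e = real (card E)"
      define S where "S = (\<Sum>w\<in>V. (real (card (nbr V E w)))^2)"
      define nn where "nn = real n"
      have cs: "4 * e^2 \<le> nn * S" using deg_cs[OF g] cV unfolding e_def S_def nn_def by simp
      have tl: "S - nn * e \<le> tinc V E" using tinc_lower[OF g] cV unfolding e_def S_def nn_def by simp
      show "real (card E) \<le> real n ^ 2 / 4 + \<epsilon> * real n ^ 2"
      proof (rule ccontr)
        assume "\<not> ?thesis"
        then have eb: "nn^2/4 + \<epsilon> * nn^2 < e" unfolding e_def nn_def by simp
        have a1: "0 \<le> nn^2/4" by simp
        have a2: "nn^2/4 \<le> e" using eb e0 by (smt (verit) mult_nonneg_nonneg zero_le_power2)
        have a3: "4 * \<epsilon> * nn^2 \<le> 4*e - nn^2" using eb by simp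
        have "(nn^2/4) * (4 * \<epsilon> * nn^2) \<le> e * (4*e - nn^2)"
          by (rule mult_mono[OF a2 a3]) (use a1 e0 in \<open>simp_all add: e_def\<close>)
        then have "\<epsilon> * nn^4 \<le> e * (4*e - nn^2)" by (simp add: power2_eq_square power4_eq_xxxx algebra_simps)
        also have "\<dots> = 4 * e^2 - nn^2 * e" by (simp add: algebra_simps power2_eq_square)
        also have "\<dots> \<le> nn * S - nn^2 * e" using cs by simp
        also have "\<dots> = nn * (S - nn * e)" by (simp add: algebra_simps power2_eq_square)
        also have "\<dots> \<le> nn * tinc V E" using tl n0 unfolding nn_def by (simp add: mult_left_mono)
        finally have "\<epsilon> * nn^4 \<le> nn * tinc V E" .
        moreover have "nn * tinc V E < nn * (\<epsilon> * nn^3)" using ti n0 unfolding nn_def by simp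
        moreover have "nn * (\<epsilon> * nn^3) = \<epsilon> * nn^4" by (simp add: power3_eq_cube power4_eq_xxxx)
        ultimately show False by simp
      qed
    qed
  qed
qed

end
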